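(* Let $(X,\mathbb{A},d)$ be a complete $C^*$-algebra valued asymmetric metric space and let $T:X\to X$ be a forward $C^*$-algebra valued contractive mapping, i.e. there exists $a\in\mathbb{A}$ with $\|a\|<1$ such that $d(Tx,Ty)\preceq a^*\,d(x,y)\,a$ for all $x,y\in X$. Then $T$ has a unique fixed point in $X$.
   Context: $\mathbb{A}$ is a unital $C^*$-algebra with unit $I_{\mathbb{A}}$ and zero $0_{\mathbb{A}}$; $\mathbb{A}^+$ denotes its positive elements and, for self-adjoint $a,b$, $a\preceq b$ means $b-a\in\mathbb{A}^+$. $\epsilon\succ 0_{\mathbb{A}}$ means $\epsilon\in\mathbb{A}^+$ is invertible (equivalently $\epsilon\succeq\delta I_{\mathbb{A}}$ for some real $\delta>0$). A $C^*$-algebra valued asymmetric metric on a nonempty set $X$ is a map $d:X\times X\to\mathbb{A}$ such that (i) $0_{\mathbb{A}}\preceq d(x,y)$ for all $x,y$, and $d(x,y)=0_{\mathbb{A}}$ iff $x=y$; (ii) $d(x,y)\preceq d(x,z)+d(z,y)$ for all $x,y,z$ (symmetry not required); $(X,\mathbb{A},d)$ is then a $C^*$-algebra valued asymmetric metric space. A sequence $\{x_n\}$ forward converges to $x$ if for every $\epsilon\succ0_{\mathbb{A}}$ there is $k$ with $d(x,x_n)\preceq\epsilon$ for all $n\ge k$; it backward converges to $x$ if for every $\epsilon\succ0_{\mathbb{A}}$ there is $k$ with $d(x_n,x)\preceq\epsilon$ for all $n\ge k$. $\{x_n\}$ is forward Cauchy if for every $\epsilon\succ0_{\mathbb{A}}$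 there is $k$ with $d(x_p,x_n)\preceq\epsilon$ for all $n>p\ge k$; it is backward Cauchy if for every $\epsilon\succ0_{\mathbb{A}}$ there is $k$ with $d(x_n,x_p)\preceq\epsilon$ for all $n>p\ge k$. $X$ is forward (resp. backward) complete if every forward (resp. backward) Cauchy sequence forward (resp. backward) converges to some point of $X$; $X$ is complete if it is both forward and backward complete. *)

theory Defs
  imports "HOL-Analysis.Analysis"
begin

text \<open>A unital complex C*-algebra, presented on a type 'a that is a real Banach algebra
with unit (norm 1 = 1), together with a complex scalar multiplication sc and an
involution star satisfying the C*-identity.\<close>

definition cstar_algebra ::
  "(complex \<Rightarrow> 'a::{real_normed_algebra_1,banach} \<Rightarrow> 'a) \<Rightarrow> ('a \<Rightarrow> 'a) \<Rightarrow> bool" where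
  "cstar_algebra sc star \<longleftrightarrow>
     (\<forall>r x. sc (complex_of_real r) x = scaleR r x) \<and>
     (\<forall>c1 c2 x. sc (c1 * c2) x = sc c1 (sc c2 x)) \<and>
     (\<forall>c1 c2 x. sc (c1 + c2) x = sc c1 x + sc c2 x) \<and>
     (\<forall>c x y. sc c (x + y) = sc c x + sc c y) \<and>
     (\<forall>c x. norm (sc c x) = cmod c * norm x) \<and>
     (\<forall>c x y. sc c (x * y) = sc c x * y \<and> sc c (x * y) = x * sc c y) \<and>
     (\<forall>x. star (star x) = x) \<and>
     (\<forall>x y. star (x + y) = star x + star y) \<and>
     (\<forall>x y. star (x * y) = star y * star x) \<and>
     (\<forall>c x. star (sc c x) = sc (cnj c) (star x)) \<and>
     (\<forall>x. norm (star x * x) = (norm x)\<^sup>2)"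

definition c_invertible :: "'a::ring_1 \<Rightarrow> bool" where
  "c_invertible x \<longleftrightarrow> (\<exists>y. y * x = 1 \<and> x * y = 1)"

definition c_spectrum :: "(complex \<Rightarrow> 'a::ring_1 \<Rightarrow> 'a) \<Rightarrow> 'a \<Rightarrow> complex set" where
  "c_spectrum sc x = {z. \<not> c_invertible (x - sc z 1)}"

definition c_positive :: "(complex \<Rightarrow> 'a::ring_1 \<Rightarrow> 'a) \<Rightarrow> ('a \<Rightarrow> 'a) \<Rightarrow> 'a \<Rightarrow> bool" where
  "c_positive sc star x \<longleftrightarrow>
     star x = x \<and> c_spectrum sc x \<subseteq> {complex_of_real r | r. r \<ge> 0}"

definition c_le :: "(complex \<Rightarrow> 'a::ring_1 \<Rightarrow> 'a) \<Rightarrow> ('a \<Rightarrow> 'a) \<Rightarrow> 'a \<Rightarrow> 'a \<Rightarrow> bool" where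
  "c_le sc star a b \<longleftrightarrow> c_positive sc star (b - a)"

definition c_gt0 :: "(complex \<Rightarrow> 'a::ring_1 \<Rightarrow> 'a) \<Rightarrow> ('a \<Rightarrow> 'a) \<Rightarrow> 'a \<Rightarrow> bool" where
  "c_gt0 sc star e \<longleftrightarrow> c_positive sc star e \<and> c_invertible e"

definition casym_metric ::
  "(complex \<Rightarrow> 'a::ring_1 \<Rightarrow> 'a) \<Rightarrow> ('a \<Rightarrow> 'a) \<Rightarrow> ('x \<Rightarrow> 'x \<Rightarrow> 'a) \<Rightarrow> bool" where
  "casym_metric sc star d \<longleftrightarrow>
     (\<forall>x y. c_le sc star 0 (d x y)) \<and>
     (\<forall>x y. d x y = 0 \<longleftrightarrow> x = y) \<and>
     (\<forall>x y z. c_le sc star (d x y) (d x z + d z y))"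

definition forward_conv ::
  "(complex \<Rightarrow> 'a::ring_1 \<Rightarrow> 'a) \<Rightarrow> ('a \<Rightarrow> 'a) \<Rightarrow> ('x \<Rightarrow> 'x \<Rightarrow> 'a) \<Rightarrow> (nat \<Rightarrow> 'x) \<Rightarrow> 'x \<Rightarrow> bool" where
  "forward_conv sc star d s x \<longleftrightarrow>
     (\<forall>e. c_gt0 sc star e \<longrightarrow> (\<exists>k. \<forall>n\<ge>k. c_le sc star (d x (s n)) e))"

definition backward_conv ::
  "(complex \<Rightarrow> 'a::ring_1 \<Rightarrow> 'a) \<Rightarrow> ('a \<Rightarrow> 'a) \<Rightarrow> ('x \<Rightarrow> 'x \<Rightarrow> 'a) \<Rightarrow> (nat \<Rightarrow> 'x) \<Rightarrow> 'x \<Rightarrow> bool" where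
  "backward_conv sc star d s x \<longleftrightarrow>
     (\<forall>e. c_gt0 sc star e \<longrightarrow> (\<exists>k. \<forall>n\<ge>k. c_le sc star (d (s n) x) e))"

definition forward_cauchy ::
  "(complex \<Rightarrow> 'a::ring_1 \<Rightarrow> 'a) \<Rightarrow> ('a \<Rightarrow> 'a) \<Rightarrow> ('x \<Rightarrow> 'x \<Rightarrow> 'a) \<Rightarrow> (nat \<Rightarrow> 'x) \<Rightarrow> bool" where
  "forward_cauchy sc star d s \<longleftrightarrow>
     (\<forall>e. c_gt0 sc star e \<longrightarrow> (\<exists>k. \<forall>n p. k \<le> p \<and> p < n \<longrightarrow> c_le sc star (d (s p) (s n)) e))"

definition backward_cauchy ::
  "(complex \<Rightarrow> 'a::ring_1 \<Rightarrow> 'a) \<Rightarrow> ('a \<Rightarrow> 'a) \<Rightarrow> ('x \<Rightarrow> 'x \<Rightarrow> 'a) \<Rightarrow> (nat \<Rightarrow> 'x) \<Rightarrow> bool" where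
  "backward_cauchy sc star d s \<longleftrightarrow>
     (\<forall>e. c_gt0 sc star e \<longrightarrow> (\<exists>k. \<forall>n p. k \<le> p \<and> p < n \<longrightarrow> c_le sc star (d (s n) (s p)) e))"

definition casym_complete ::
  "(complex \<Rightarrow> 'a::ring_1 \<Rightarrow> 'a) \<Rightarrow> ('a \<Rightarrow> 'a) \<Rightarrow> ('x \<Rightarrow> 'x \<Rightarrow> 'a) \<Rightarrow> bool" where
  "casym_complete sc star d \<longleftrightarrow>
     (\<forall>s. forward_cauchy sc star d s \<longrightarrow> (\<exists>x. forward_conv sc star d s x)) \<and>
     (\<forall>s. backward_cauchy sc star d s \<longrightarrow> (\<exists>x. backward_conv sc star d s x))"

end

theory Submission
  imports Defs
begin


locale cstar =
  fixes sc :: "complex \<Rightarrow> 'a::{real_normed_algebra_1,banach} \<Rightarrow> 'a"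
    and star :: "'a \<Rightarrow> 'a"
  assumes cs: "cstar_algebra sc star"
begin

definition e :: "complex \<Rightarrow> 'a" where "e z = sc z 1"
definition inv :: "'a \<Rightarrow> 'a" where "inv x = (SOME y. y * x = 1 \<and> x * y = 1)"
abbreviation I where "I \<equiv> c_invertible :: 'a \<Rightarrow> bool"

lemma sc_real: "sc (complex_of_real r) x = scaleR r x" using cs unfolding cstar_algebra_def by simp
lemma sc_mult: "sc (c1 * c2) x = sc c1 (sc c2 x)" using cs unfolding cstar_algebra_def by simp
lemma sc_addl: "sc (c1 + c2) x = sc c1 x + sc c2 x" using cs unfolding cstar_algebra_def by simp
lemma sc_norm: "norm (sc c x) = cmod c * norm x" using cs unfolding cstar_algebra_def by simp
lemma sc_m: "\<forall>c x y. sc c (x * y) = sc c x * y \<and> sc c (x * y) = x * sc c y"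
  using cs unfolding cstar_algebra_def by (elim conjE) assumption
lemma sc_ml: "sc c (x * y) = sc c x * y" using sc_m by blast
lemma sc_mr: "sc c (x * y) = x * sc c y" using sc_m by blast
lemma star_star[simp]: "star (star x) = x" using cs unfolding cstar_algebra_def by simp
lemma star_add: "star (x + y) = star x + star y" using cs unfolding cstar_algebra_def by simp
lemma star_mult: "star (x * y) = star y * star x" using cs unfolding cstar_algebra_def by simp
lemma star_sc: "star (sc c x) = sc (cnj c) (star x)" using cs unfolding cstar_algebra_def by simp
lemma cstar_id: "norm (star x * x) = (norm x)\<^sup>2" using cs unfolding cstar_algebra_def by simp

lemma sc_e: "sc z x = e z * x"
  unfolding e_def using sc_ml[of z 1 x] by simp
lemma e_central: "e z * x = x * e z"
  unfolding e_def using sc_ml[of z 1 x] sc_mr[of z x 1] by simp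
lemma e_mult: "e (z * w) = e z * e w"
proof -
  have "e (z * w) = sc z (sc w 1)" unfolding e_def by (simp add: sc_mult)
  also have "\<dots> = e z * e w" by (simp only: sc_e[of z] e_def[symmetric])
  finally show ?thesis .
qed
lemma e_add: "e (z + w) = e z + e w"
  unfolding e_def by (simp add: sc_addl)
lemma e_real: "e (complex_of_real r) = of_real r"
  unfolding e_def sc_real by (simp add: of_real_def)
lemma e_0[simp]: "e 0 = 0" using e_real[of 0] by simp
lemma e_1[simp]: "e 1 = 1" using e_real[of 1] by simp
lemma e_minus: "e (- z) = - e z"
  using e_add[of z "-z"] by (simp add: minus_unique)
lemma e_diff: "e (z - w) = e z - e w"
  using e_add[of z "-w"] e_minus[of w] by simp
lemma norm_e: "norm (e z) = cmod z"
  unfolding e_def by (simp add: sc_norm)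
lemma e_power: "e z ^ n = e (z ^ n)"
  by (induction n) (auto simp: e_mult)
lemma e_inj: "e z = e w \<Longrightarrow> z = w"
  using norm_e[of "z - w"] e_diff[of z w] by simp
lemma scaleR_e: "scaleR r x = e (complex_of_real r) * x"
  using sc_real[of r x] sc_e by simp
lemma power_e_mult: "(e z * x) ^ n = e (z ^ n) * x ^ n"
proof (induction n)
  case (Suc n)
  have "(e z * x) ^ Suc n = (e z * x) * (e (z^n) * x^n)" using Suc by simp
  also have "\<dots> = e z * e (z^n) * (x * x^n)"
    by (metis e_central mult.assoc)
  finally show ?case by (simp add: e_mult)
qed simp

lemma star_1[simp]: "star 1 = 1"
proof -
  have "star 1 = star 1 * star (star 1)" by simp
  also have "\<dots> = star (star 1 * 1)" by (simp only: star_mult)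
  also have "\<dots> = 1" by simp
  finally show ?thesis .
qed
lemma star_e: "star (e z) = e (cnj z)"
  unfolding e_def by (simp add: star_sc)
lemma star_0[simp]: "star 0 = 0"
  using star_add[of 0 0] by simp
lemma star_minus: "star (- x) = - star x"
  using star_add[of x "-x"] by (simp add: minus_unique)
lemma star_diff: "star (x - y) = star x - star y"
  using star_add[of x "-y"] star_minus[of y] by simp
lemma star_scaleR: "star (scaleR r x) = scaleR r (star x)"
  using star_sc[of "complex_of_real r" x] by (simp add: sc_real)
lemma star_real: "star (of_real r) = of_real r"
  using star_e[of "complex_of_real r"] e_real by simp
lemma star_power: "star (x ^ n) = star x ^ n"
  by (induction n) (auto simp: star_mult power_commutes)

lemma norm_star: "norm (star x) = norm x"
proof -
  have a: "norm y \<le> norm (star y)" for y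
  proof (cases "y = 0")
    case False
    have "norm y ^ 2 \<le> norm (star y) * norm y"
      using cstar_id[of y] norm_mult_ineq[of "star y" y] by simp
    then show ?thesis using False by (simp add: power2_eq_square)
  qed simp
  show ?thesis using a[of x] a[of "star x"] by simp
qed

lemma sa_norm_sq: "star h = h \<Longrightarrow> norm (h * h) = norm h ^ 2"
  using cstar_id[of h] by simp

lemma sa_norm_pow2: "star h = h \<Longrightarrow> norm (h ^ (2 ^ m)) = norm h ^ (2 ^ m)"
proof (induction m)
  case (Suc m)
  have sa: "star (h ^ 2 ^ m) = h ^ 2 ^ m" using Suc.prems star_power by simp
  have "h ^ 2 ^ Suc m = h ^ 2 ^ m * h ^ 2 ^ m"
    by (simp add: power_add[symmetric] mult_2)
  then have "norm (h ^ 2 ^ Suc m) = norm (h ^ 2 ^ m) ^ 2" using sa_norm_sq[OF sa] by simp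
  then show ?case using Suc by (simp add: power_mult[symmetric] mult.commute)
qed simp

end

context cstar begin

lemma inv_props: "I x \<Longrightarrow> inv x * x = 1 \<and> x * inv x = 1"
  unfolding inv_def c_invertible_def by (rule someI_ex)
lemma invl: "I x \<Longrightarrow> inv x * x = 1" using inv_props by blast
lemma invr: "I x \<Longrightarrow> x * inv x = 1" using inv_props by blast
lemma inv_uniqueL: "I x \<Longrightarrow> y * x = 1 \<Longrightarrow> inv x = y"
proof -
  assume "I x" "y * x = 1"
  then have "y = y * (x * inv x)" by (simp add: invr)
  also have "\<dots> = inv x" by (simp add: mult.assoc[symmetric] \<open>y * x = 1\<close>)
  finally show ?thesis by simp
qed
lemma I_intro: "y * x = 1 \<Longrightarrow> x * y = 1 \<Longrightarrow> I x"
  unfolding c_invertible_def by blast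
lemma I_intro_inv: "y * x = 1 \<Longrightarrow> x * y = 1 \<Longrightarrow> I x \<and> inv x = y"
  using I_intro inv_uniqueL by blast
lemma I_mult: "I a \<Longrightarrow> I b \<Longrightarrow> I (a * b) \<and> inv (a * b) = inv b * inv a"
proof -
  assume a: "I a" and b: "I b"
  have "(inv b * inv a) * (a * b) = inv b * ((inv a * a) * b)" by (simp only: mult.assoc)
  then have "(inv b * inv a) * (a * b) = 1" using invl[OF a] invl[OF b] by simp
  moreover have "(a * b) * (inv b * inv a) = a * ((b * inv b) * inv a)" by (simp only: mult.assoc)
  then have "(a * b) * (inv b * inv a) = 1" using invr[OF a] invr[OF b] by simp
  ultimately show ?thesis using I_intro_inv by blast
qed
lemma I_1: "I 1" using I_intro[of 1 1] by simp
lemma not_I_0: "\<not> I 0"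
proof
  assume "I 0" then have "(1::'a) = 0" using invr by force
  then show False using norm_one[where 'a='a] by simp
qed
lemma I_neg: "I (- x) \<longleftrightarrow> I x"
proof
  assume "I (- x)" then show "I x" using I_intro[of "- inv (- x)" x] invl[of "-x"] invr[of "-x"] by simp
next
  assume "I x" then show "I (- x)" using I_intro[of "- inv x" "- x"] invl[of x] invr[of x] by simp
qed
lemma inv_neg: "I x \<Longrightarrow> inv (- x) = - inv x"
  using inv_uniqueL[of "-x" "- inv x"] I_neg invl[of x] by simp
lemma I_e: "z \<noteq> 0 \<Longrightarrow> I (e z) \<and> inv (e z) = e (inverse z)"
  by (rule I_intro_inv) (simp_all add: e_mult[symmetric])

lemma neumann:
  assumes "norm y < 1"
  shows "I (1 - y) \<and> norm (inv (1 - y)) \<le> 1 / (1 - norm y)"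
proof -
  have sn: "summable (\<lambda>n. norm y ^ n)" using assms by (simp add: summable_geometric)
  have sny: "summable (\<lambda>n. norm (y ^ n))"
    by (rule summable_comparison_test[OF _ sn]) (simp add: norm_power_ineq)
  have sy: "summable (\<lambda>n. y ^ n)" using sny summable_norm_cancel by blast
  define s where "s = (\<Sum>n. y ^ n)"
  have h1: "y * s = s - 1"
  proof -
    have "y * s = (\<Sum>n. y * y ^ n)" unfolding s_def by (simp add: suminf_mult sy)
    also have "\<dots> = (\<Sum>n. y ^ Suc n)" by simp
    also have "\<dots> = s - 1" unfolding s_def using suminf_split_head[OF sy] by simp
    finally show ?thesis .
  qed
  have h2: "s * y = s - 1"
  proof -
    have "s * y = (\<Sum>n. y ^ n * y)" unfolding s_def by (simp add: suminf_mult2 sy)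
    also have "\<dots> = (\<Sum>n. y ^ Suc n)" by (simp only: power_Suc2)
    also have "\<dots> = s - 1" unfolding s_def using suminf_split_head[OF sy] by simp
    finally show ?thesis .
  qed
  have "s * (1 - y) = 1" using h2 by (simp add: algebra_simps)
  moreover have "(1 - y) * s = 1" using h1 by (simp add: algebra_simps)
  ultimately have inv: "I (1 - y) \<and> inv (1 - y) = s" using I_intro_inv by blast
  have "norm s \<le> (\<Sum>n. norm (y ^ n))" unfolding s_def using summable_norm[OF sny] .
  also have "\<dots> \<le> (\<Sum>n. norm y ^ n)"
    by (rule suminf_le[OF _ sny sn]) (simp add: norm_power_ineq)
  also have "\<dots> = 1 / (1 - norm y)" using assms by (simp add: suminf_geometric)
  finally show ?thesis using inv by simp
qed

lemma perturb:
  assumes a: "I a" and small: "norm (inv a) * norm c \<le> 1/2"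
  shows "I (a - c) \<and> norm (inv (a - c)) \<le> 2 * norm (inv a)
         \<and> norm (inv (a - c) - inv a) \<le> 2 * norm (inv a) ^ 2 * norm c"
proof -
  define y where "y = inv a * c"
  have ny: "norm y \<le> 1/2" unfolding y_def using norm_mult_ineq[of "inv a" c] small by linarith
  then obtain n1: "I (1 - y)" and n2: "norm (inv (1 - y)) \<le> 1 / (1 - norm y)"
    using neumann[of y] by force
  have "1 / (1 - norm y) \<le> 2" using ny norm_ge_zero[of y] by (simp add: field_simps)
  with n2 have n3: "norm (inv (1 - y)) \<le> 2" by linarith
  have eq: "a - c = a * (1 - y)" unfolding y_def
    by (simp add: algebra_simps mult.assoc[symmetric] invr[OF a])
  have m: "I (a - c) \<and> inv (a - c) = inv (1 - y) * inv a"
    using I_mult[OF a n1] eq by simp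
  have b1: "norm (inv (a - c)) \<le> 2 * norm (inv a)"
  proof -
    have "norm (inv (a - c)) \<le> norm (inv (1 - y)) * norm (inv a)"
      using m norm_mult_ineq[of "inv (1 - y)" "inv a"] by simp
    also have "\<dots> \<le> 2 * norm (inv a)" by (intro mult_right_mono n3 norm_ge_zero)
    finally show ?thesis .
  qed
  have "inv (a - c) * c * inv a = inv (a - c) * (a * inv a) - (inv (a - c) * (a - c)) * inv a"
    by (simp add: algebra_simps)
  then have "inv (a - c) - inv a = inv (a - c) * c * inv a"
    using m invl[of "a - c"] invr[OF a] by simp
  then have "norm (inv (a - c) - inv a) \<le> norm (inv (a - c) * c) * norm (inv a)"
    using norm_mult_ineq[of "inv (a - c) * c" "inv a"] by simp
  also have "\<dots> \<le> norm (inv (a - c)) * norm c * norm (inv a)"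
    by (intro mult_right_mono norm_mult_ineq norm_ge_zero)
  also have "\<dots> \<le> (2 * norm (inv a)) * norm c * norm (inv a)"
    by (intro mult_right_mono b1 norm_ge_zero)
  finally show ?thesis using m b1 by (simp add: power2_eq_square mult_ac)
qed

end

context cstar begin

abbreviation spec where "spec x \<equiv> c_spectrum sc x"

lemma spec_iff: "z \<in> spec x \<longleftrightarrow> \<not> I (x - e z)"
  unfolding c_spectrum_def e_def by simp

lemma I_emult: "w \<noteq> 0 \<Longrightarrow> I (e w * y) \<longleftrightarrow> I y"
proof
  assume w: "w \<noteq> 0" and "I (e w * y)"
  have "y = e (inverse w) * (e w * y)" using w by (simp add: mult.assoc[symmetric] e_mult[symmetric])
  then show "I y" using I_mult[OF conjunct1[OF I_e[of "inverse w"]] \<open>I (e w * y)\<close>] w by simp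
next
  assume w: "w \<noteq> 0" and "I y"
  then show "I (e w * y)" using I_mult[OF conjunct1[OF I_e[OF w]] \<open>I y\<close>] by simp
qed

lemma spec_bound: "z \<in> spec x \<Longrightarrow> cmod z \<le> norm x"
proof (rule ccontr)
  assume z: "z \<in> spec x" and "\<not> cmod z \<le> norm x"
  then have lt: "norm x < cmod z" by simp
  then have z0: "z \<noteq> 0" by auto
  have "norm (e (inverse z) * x) \<le> cmod (inverse z) * norm x"
    using norm_mult_ineq[of "e (inverse z)" x] by (simp add: norm_e)
  also have "\<dots> = norm x / cmod z" by (simp add: norm_inverse divide_inverse mult.commute)
  also have "\<dots> < 1" using lt z0 by simp
  finally have "I (1 - e (inverse z) * x)" using neumann by blast
  then have "I (e (- z) * (1 - e (inverse z) * x))" using I_emult[of "-z"] z0 by simp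
  moreover have "e (- z) * (1 - e (inverse z) * x) = x - e z"
    using z0 by (simp add: algebra_simps mult.assoc[symmetric] e_mult[symmetric] e_minus)
  ultimately show False using z spec_iff by simp
qed

lemma spec_shift: "z \<in> spec (x + e w) \<longleftrightarrow> z - w \<in> spec x"
  unfolding spec_iff by (simp add: e_diff algebra_simps)

lemma spec_refl: "z \<in> spec (e w - x) \<longleftrightarrow> w - z \<in> spec x"
proof -
  have "e w - x - e z = - (x - e (w - z))" by (simp add: e_diff)
  then show ?thesis by (simp only: spec_iff I_neg)
qed

lemma spec_e: "spec (e w) = {w}"
proof -
  have "z \<in> spec (e w) \<longleftrightarrow> z = w" for z
  proof -
    have "e w - e z = e (w - z)" by (simp add: e_diff)
    then show ?thesis unfolding spec_iff using I_e[of "w - z"] not_I_0 by auto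
  qed
  then show ?thesis by blast
qed

lemma half_two: "(1/2::real) *\<^sub>R (2::'a) = 1"
proof -
  have "(1/2::real) *\<^sub>R (2::'a) = of_real (1/2) * of_real 2" by (simp add: scaleR_conv_of_real)
  also have "\<dots> = of_real (1/2 * 2)" by (simp only: of_real_mult)
  also have "\<dots> = 1" by simp
  finally show ?thesis .
qed

lemma pf_inv:
  assumes A: "I A" and B: "I B" and c: "A * B = B * A" and s: "A + B = 2"
  shows "I (A * B) \<and> inv (A * B) = (1/2) *\<^sub>R (inv A + inv B)"
proof (rule I_intro_inv)
  have "(inv A + inv B) * (A * B) = (inv A * A) * B + inv B * (B * A)"
    by (simp add: algebra_simps c)
  also have "\<dots> = B + A" by (simp add: invl[OF A] mult.assoc[symmetric] invl[OF B])
  finally show "((1/2) *\<^sub>R (inv A + inv B)) * (A * B) = 1" using s half_two by (simp add: add.commute)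
  have "(A * B) * (inv A + inv B) = (A * B) * inv A + (A * B) * inv B"
    by (simp only: distrib_left)
  also have "\<dots> = (B * A) * inv A + A * (B * inv B)" by (subst (1) c, simp only: mult.assoc)
  also have "\<dots> = B + A" by (simp add: invr[OF A] mult.assoc invr[OF B])
  finally show "(A * B) * ((1/2) *\<^sub>R (inv A + inv B)) = 1" using s half_two by (simp add: add.commute)
qed

end

context cstar begin

lemma eq_shift: "1 - e l0 * x - e (l - l0) * x = 1 - e l * x"
  by (simp add: e_diff algebra_simps)

lemma res_perturb:
  assumes I0: "I (1 - e l0 * x)" and nx: "norm x \<le> 1"
    and sm: "norm (inv (1 - e l0 * x)) * cmod (l - l0) \<le> 1/2"
  shows "I (1 - e l * x) \<and> norm (inv (1 - e l * x) - inv (1 - e l0 * x))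
            \<le> 2 * norm (inv (1 - e l0 * x)) ^ 2 * cmod (l - l0)"
proof -
  have nc: "norm (e (l - l0) * x) \<le> cmod (l - l0)"
  proof -
    have "norm (e (l - l0) * x) \<le> cmod (l - l0) * norm x"
      using norm_mult_ineq[of "e (l - l0)" x] norm_e[of "l - l0"] by simp
    also have "\<dots> \<le> cmod (l - l0) * 1" by (intro mult_left_mono nx) simp
    finally show ?thesis by simp
  qed
  have sm2: "norm (inv (1 - e l0 * x)) * norm (e (l - l0) * x) \<le> 1/2"
    by (rule order_trans[OF mult_left_mono[OF nc norm_ge_zero] sm])
  note p = perturb[OF I0 sm2, unfolded eq_shift]
  have "2 * norm (inv (1 - e l0 * x)) ^ 2 * norm (e (l - l0) * x)
       \<le> 2 * norm (inv (1 - e l0 * x)) ^ 2 * cmod (l - l0)"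
    by (rule mult_left_mono[OF nc]) simp
  then show ?thesis using p by linarith
qed

lemma spectral_contra:
  assumes sa: "star x = x" and nx: "norm x = 1"
    and inv1: "\<And>l. cmod l \<le> 1 \<Longrightarrow> I (1 - e l * x)"
  shows False
proof -
  define f where "f l = inv (1 - e l * x)" for l
  define S where "S = cball (0::complex) 1"
  have cont: "continuous_on S f"
    unfolding continuous_on_iff
  proof (intro ballI allI impI)
    fix l0 :: complex and eps :: real
    assume l0: "l0 \<in> S" and eps: "eps > 0"
    define M where "M = norm (f l0)"
    have M0: "M \<ge> 0" unfolding M_def by simp
    define d where "d = min (1 / (2 * (M + 1))) (eps / (2 * (M + 1) ^ 2))"
    have d0: "d > 0" unfolding d_def using M0 eps by simp
    show "\<exists>d>0. \<forall>l\<in>S. dist l l0 < d \<longrightarrow> dist (f l) (f l0) < eps"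
    proof (intro exI[of _ d] conjI ballI impI d0)
      fix l assume "l \<in> S" "dist l l0 < d"
      then have dl: "cmod (l - l0) < d" by (simp add: dist_norm)
      have I0: "I (1 - e l0 * x)" using l0 inv1 unfolding S_def by simp
      have "M * cmod (l - l0) \<le> (M + 1) * d"
        using dl M0 by (intro mult_mono) auto
      also have "\<dots> \<le> (M + 1) * (1 / (2 * (M + 1)))"
        unfolding d_def using M0 by (intro mult_left_mono) auto
      also have "\<dots> = 1/2" using M0 by simp
      finally have sm: "norm (inv (1 - e l0 * x)) * cmod (l - l0) \<le> 1/2"
        unfolding M_def f_def .
      have "norm (f l - f l0) \<le> 2 * M ^ 2 * cmod (l - l0)"
        using res_perturb[OF I0 _ sm] nx unfolding f_def M_def by simp
      also have "\<dots> \<le> 2 * (M + 1) ^ 2 * cmod (l - l0)"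
        using M0 by (intro mult_right_mono mult_left_mono power_mono) auto
      also have "\<dots> < 2 * (M + 1) ^ 2 * d"
        using dl M0 by (intro mult_strict_left_mono) auto
      also have "\<dots> \<le> 2 * (M + 1) ^ 2 * (eps / (2 * (M + 1) ^ 2))"
        unfolding d_def using M0 by (intro mult_left_mono) auto
      also have "\<dots> = eps" using M0 by simp
      finally show "dist (f l) (f l0) < eps" by (simp add: dist_norm)
    qed
  qed
  have "bounded (f ` S)"
    by (rule compact_imp_bounded[OF compact_continuous_image[OF cont]]) (simp add: S_def)
  then obtain K where K0: "K > 0" and K: "\<And>l. l \<in> S \<Longrightarrow> norm (f l) \<le> K"
    unfolding bounded_pos by blast
  define L where "L = K ^ 2"
  have lip: "norm (f a - f b) \<le> L * cmod (a - b)" if "a \<in> S" "b \<in> S" for a b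
  proof -
    have Ia: "I (1 - e a * x)" and Ib: "I (1 - e b * x)"
      using that inv1 unfolding S_def by auto
    have "f a * (e (a - b) * x) * f b = f a * ((1 - e b * x) - (1 - e a * x)) * f b"
      by (simp add: e_diff algebra_simps)
    also have "\<dots> = (f a * (1 - e b * x) * f b) - (f a * (1 - e a * x)) * f b"
      by (simp add: algebra_simps)
    also have "\<dots> = f a - f b"
      unfolding f_def by (simp add: mult.assoc invr[OF Ib] invl[OF Ia])
    finally have eq: "f a - f b = f a * (e (a - b) * x) * f b" by simp
    have "norm (f a - f b) \<le> norm (f a * (e (a - b) * x)) * norm (f b)"
      unfolding eq by (rule norm_mult_ineq)
    also have "\<dots> \<le> norm (f a) * norm (e (a - b) * x) * norm (f b)"
      by (intro mult_right_mono norm_mult_ineq norm_ge_zero)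
    also have "\<dots> \<le> K * cmod (a - b) * K"
    proof (intro mult_mono)
      show "norm (e (a - b) * x) \<le> cmod (a - b)"
        using norm_mult_ineq[of "e (a - b)" x] nx norm_e by simp
    qed (use K that K0 in auto)
    finally show ?thesis unfolding L_def by (simp add: power2_eq_square mult_ac)
  qed
  have ind: "(\<forall>a\<in>S. I (1 - (e a * x) ^ (2 ^ m))) \<and>
     (\<forall>a\<in>S. \<forall>b\<in>S. norm (inv (1 - (e a * x) ^ (2 ^ m)) - inv (1 - (e b * x) ^ (2 ^ m)))
        \<le> L * cmod (a - b))" for m
  proof (induction m)
    case 0
    then show ?case using inv1 lip unfolding f_def S_def by simp
  next
    case (Suc m)
    define N where "N = (2::nat) ^ m"
    define z where "z = cis (pi / N)"
    have zN: "z ^ N = -1"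
    proof -
      have "z ^ N = cis (real N * (pi / real N))" by (simp only: z_def Complex.DeMoivre)
      also have "real N * (pi / real N) = pi" unfolding N_def by simp
      finally show ?thesis by simp
    qed
    have cz: "cmod z = 1" unfolding z_def by simp
    have inS: "a * z \<in> S" if "a \<in> S" for a using that cz unfolding S_def by (simp add: norm_mult)
    have rot: "(e (a * z) * x) ^ N = - ((e a * x) ^ N)" for a
      by (simp add: power_e_mult power_mult_distrib zN e_minus)
    have split: "1 - (e a * x) ^ (2 ^ Suc m) = (1 - (e a * x) ^ N) * (1 - (e (a * z) * x) ^ N)" for a
    proof -
      have "(e a * x) ^ (2 ^ Suc m) = (e a * x) ^ N * (e a * x) ^ N"
        unfolding N_def by (simp add: power_add[symmetric] mult_2)
      then show ?thesis unfolding rot by (simp add: algebra_simps)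
    qed
    have key: "I (1 - (e a * x) ^ (2 ^ Suc m)) \<and> inv (1 - (e a * x) ^ (2 ^ Suc m))
       = (1/2) *\<^sub>R (inv (1 - (e a * x) ^ N) + inv (1 - (e (a * z) * x) ^ N))" if a: "a \<in> S" for a
      unfolding split
    proof (rule pf_inv)
      show "I (1 - (e a * x) ^ N)" using Suc.IH a unfolding N_def by blast
      show "I (1 - (e (a * z) * x) ^ N)" using Suc.IH inS[OF a] unfolding N_def by blast
      show "(1 - (e a * x) ^ N) * (1 - (e (a * z) * x) ^ N) = (1 - (e (a * z) * x) ^ N) * (1 - (e a * x) ^ N)"
        unfolding rot by (simp add: algebra_simps)
      show "(1 - (e a * x) ^ N) + (1 - (e (a * z) * x) ^ N) = 2"
        unfolding rot by simp
    qed
    show ?case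
    proof (intro conjI ballI)
      fix a assume "a \<in> S" then show "I (1 - (e a * x) ^ (2 ^ Suc m))" using key by blast
    next
      fix a b assume a: "a \<in> S" and b: "b \<in> S"
      have d1: "norm (inv (1 - (e a * x) ^ N) - inv (1 - (e b * x) ^ N)) \<le> L * cmod (a - b)"
        using Suc.IH a b unfolding N_def by blast
      have "norm (inv (1 - (e (a * z) * x) ^ N) - inv (1 - (e (b * z) * x) ^ N)) \<le> L * cmod (a * z - b * z)"
        using Suc.IH inS[OF a] inS[OF b] unfolding N_def by blast
      also have "cmod (a * z - b * z) = cmod (a - b)"
        by (simp add: left_diff_distrib[symmetric] norm_mult cz)
      finally have d2: "norm (inv (1 - (e (a * z) * x) ^ N) - inv (1 - (e (b * z) * x) ^ N)) \<le> L * cmod (a - b)" .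
      have "inv (1 - (e a * x) ^ (2 ^ Suc m)) - inv (1 - (e b * x) ^ (2 ^ Suc m))
         = (1/2) *\<^sub>R ((inv (1 - (e a * x) ^ N) - inv (1 - (e b * x) ^ N))
             + (inv (1 - (e (a * z) * x) ^ N) - inv (1 - (e (b * z) * x) ^ N)))"
        using key[OF a] key[OF b] by (simp add: algebra_simps)
      also have "norm \<dots> \<le> (1/2) * (L * cmod (a - b) + L * cmod (a - b))"
        using norm_triangle_le[OF add_mono[OF d1 d2]] by simp
      finally show "norm (inv (1 - (e a * x) ^ (2 ^ Suc m)) - inv (1 - (e b * x) ^ (2 ^ Suc m)))
          \<le> L * cmod (a - b)" by simp
    qed
  qed
  have "(\<lambda>m. cis (pi * inverse (2 ^ m))) \<longlonglongrightarrow> cis (pi * 0)"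
    by (intro tendsto_cis tendsto_mult_left LIMSEQ_inverse_realpow_zero) simp
  then have lim: "(\<lambda>m. cis (pi * inverse (2 ^ m))) \<longlonglongrightarrow> 1" by simp
  have "0 < 1 / (2 * L + 1)" unfolding L_def by (simp add: add_nonneg_pos)
  from LIMSEQ_D[OF lim this] obtain m where m: "norm (cis (pi * inverse (2 ^ m)) - 1) < 1 / (2 * L + 1)"
    by blast
  define N where "N = (2::nat) ^ m"
  define z where "z = cis (pi / N)"
  have zN: "z ^ N = -1"
    proof -
      have "z ^ N = cis (real N * (pi / real N))" by (simp only: z_def Complex.DeMoivre)
      also have "real N * (pi / real N) = pi" unfolding N_def by simp
      finally show ?thesis by simp
    qed
  have cz: "cmod z = 1" unfolding z_def by simp
  have zm: "cmod (1 - z) < 1 / (2 * L + 1)"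
    using m unfolding z_def N_def by (simp add: divide_inverse norm_minus_commute)
  define u where "u = x ^ N"
  have nu: "norm u = 1" unfolding u_def N_def using sa_norm_pow2[OF sa] nx by simp
  have S1: "1 \<in> S" and Sz: "z \<in> S" unfolding S_def using cz by auto
  have "I (1 - (e 1 * x) ^ 2 ^ m)" using ind[of m] S1 by blast
  then have IA: "I (1 - u)" unfolding u_def N_def by simp
  have rot: "(e z * x) ^ N = - u" unfolding u_def by (simp add: power_e_mult zN e_minus)
  have "I (1 - (e z * x) ^ 2 ^ m)" using ind[of m] Sz by blast
  then have IB: "I (1 + u)" using rot unfolding N_def by simp
  define D where "D = inv (1 - u) - inv (1 + u)"
  have "norm (inv (1 - (e 1 * x) ^ 2 ^ m) - inv (1 - (e z * x) ^ 2 ^ m)) \<le> L * cmod (1 - z)"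
    using ind[of m] S1 Sz by blast
  then have nD: "norm D \<le> L * cmod (1 - z)"
    using rot unfolding D_def u_def N_def by simp
  have "(1 - u) * D * (1 + u) = (1 - u) * inv (1 - u) * (1 + u) - (1 - u) * (inv (1 + u) * (1 + u))"
    unfolding D_def by (simp add: algebra_simps)
  also have "\<dots> = 2 *\<^sub>R u" using invr[OF IA] invl[OF IB] by (simp add: scaleR_2)
  finally have eq: "2 *\<^sub>R u = (1 - u) * D * (1 + u)" by simp
  have "2 = norm (2 *\<^sub>R u)" using nu by simp
  also have "\<dots> \<le> norm ((1 - u) * D) * norm (1 + u)"
    unfolding eq by (rule norm_mult_ineq)
  also have "\<dots> \<le> norm (1 - u) * norm D * norm (1 + u)"
    by (intro mult_right_mono norm_mult_ineq norm_ge_zero)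
  also have "\<dots> \<le> 2 * (L * cmod (1 - z)) * 2"
  proof (intro mult_mono nD)
    show "norm (1 - u) \<le> 2" using norm_triangle_ineq4[of 1 u] nu by simp
    show "norm (1 + u) \<le> 2" using norm_triangle_ineq[of 1 u] nu by simp
  qed (auto simp: L_def)
  also have "\<dots> = 4 * L * cmod (1 - z)" by simp
  also have "\<dots> \<le> 4 * L * (1 / (2 * L + 1))"
    using zm by (intro mult_left_mono) (auto simp: L_def)
  also have "\<dots> < 2"
  proof -
    have p: "0 < 2 * L + 1" unfolding L_def by (simp add: add_nonneg_pos)
    have "4 * L * (1 / (2 * L + 1)) = 4 * L / (2 * L + 1)" by simp
    also have "\<dots> < 2" using p by (simp add: divide_less_eq)
    finally show ?thesis .
  qed
  finally show False by simp
qed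

end

context cstar begin

lemma spectral_norm:
  assumes sa: "star h = h" and sp: "\<And>z. z \<in> spec h \<Longrightarrow> cmod z \<le> r"
  shows "norm h \<le> r"
proof (rule ccontr)
  assume "\<not> norm h \<le> r"
  then have hr: "r < norm h" by simp
  show False
  proof (cases "h = 0")
    case True
    have "0 \<in> spec h" unfolding spec_iff True using not_I_0 by simp
    then have "cmod 0 \<le> r" by (rule sp)
    then show False using hr True by simp
  next
    case False
    define nh where "nh = norm h"
    have nh0: "nh > 0" using False unfolding nh_def by simp
    define x where "x = (1 / nh) *\<^sub>R h"
    have sax: "star x = x" unfolding x_def by (simp add: star_scaleR sa)
    have nx: "norm x = 1" unfolding x_def nh_def using nh0 nh_def by simp
    have inv1: "I (1 - e l * x)" if l: "cmod l \<le> 1" for l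
    proof (cases "l = 0")
      case True then show ?thesis using I_1 by simp
    next
      case l0: False
      define w where "w = complex_of_real nh / l"
      have "cmod w = nh / cmod l" unfolding w_def by (simp add: norm_divide nh0 less_imp_le)
      also have "\<dots> \<ge> nh" using l l0 nh0 by (simp add: field_simps)
      finally have "cmod w > r" using hr nh_def by simp
      then have "w \<notin> spec h" using sp by (meson not_le)
      then have Ih: "I (h - e w)" unfolding spec_iff by simp
      have ne: "- l / complex_of_real nh \<noteq> 0" using l0 nh0 by simp
      have eq: "e (- l / complex_of_real nh) * (h - e w) = 1 - e l * x"
      proof -
        have "e (- l / complex_of_real nh) * e w = - 1"
          unfolding e_mult[symmetric] w_def using l0 nh0 by (simp add: e_minus)
        moreover have "e l * x = e (l / complex_of_real nh) * h"
          unfolding x_def scaleR_e by (simp add: mult.assoc[symmetric] e_mult[symmetric] divide_inverse)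
        ultimately show ?thesis by (simp add: algebra_simps e_minus)
      qed
      show ?thesis using I_emult[OF ne, of "h - e w"] Ih unfolding eq by simp
    qed
    show False using spectral_contra[OF sax nx inv1] by blast
  qed
qed

lemma e_comm_sym: "h * e c = e c * h" using e_central by simp

lemma real_spec:
  assumes sa: "star h = h" and z: "z \<in> spec h"
  shows "Im z = 0"
proof (rule ccontr)
  assume b: "Im z \<noteq> 0"
  define nh where "nh = norm h"
  have bound: "(Re z)^2 + (Im z + s)^2 \<le> nh^2 + s^2" for s :: real
  proof -
    define c where "c = \<i> * complex_of_real s"
    have "z + c - c \<in> spec h" using z by simp
    then have "z + c \<in> spec (h + e c)" using spec_shift by blast
    then have n1: "cmod (z + c) \<le> norm (h + e c)" by (rule spec_bound)
    have st: "star (h + e c) = h - e c"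
      using sa by (simp add: star_add star_e c_def e_minus)
    have "(h - e c) * (h + e c) = h * h + e (complex_of_real (s^2))"
    proof -
      have "(h - e c) * (h + e c) = h * h + (h * e c - e c * h) - e c * e c"
        by (simp add: algebra_simps)
      also have "\<dots> = h * h - e (c * c)" by (simp add: e_comm_sym[of h c] e_mult[of c c])
      also have "c * c = - complex_of_real (s^2)" unfolding c_def
        by (simp add: power2_eq_square algebra_simps)
      finally show ?thesis by (simp add: e_minus)
    qed
    then have "norm (h + e c) ^ 2 = norm (h * h + e (complex_of_real (s^2)))"
      using cstar_id[of "h + e c"] st by simp
    also have "\<dots> \<le> norm (h * h) + s^2"
      using norm_triangle_ineq[of "h * h" "e (complex_of_real (s^2))"] by (simp add: norm_e norm_power)
    also have "\<dots> = nh^2 + s^2" using sa_norm_sq[OF sa] nh_def by simp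
    finally have n2: "norm (h + e c) ^ 2 \<le> nh^2 + s^2" .
    have "cmod (z + c) ^ 2 \<le> norm (h + e c) ^ 2"
      by (rule power_mono[OF n1 norm_ge_zero])
    moreover have "cmod (z + c) ^ 2 = (Re z)^2 + (Im z + s)^2"
      unfolding c_def cmod_power2 by simp
    ultimately show ?thesis using n2 by linarith
  qed
  define s where "s = (nh^2 + 1) / (2 * Im z)"
  have "2 * Im z * s = nh^2 + 1" unfolding s_def using b by simp
  moreover have "(Re z)^2 + (Im z + s)^2 \<le> nh^2 + s^2" by (rule bound)
  moreover have "(Im z + s)^2 = (Im z)^2 + 2 * Im z * s + s^2" by (simp add: power2_eq_square algebra_simps)
  ultimately have "(Re z)^2 + (Im z)^2 + nh^2 + 1 \<le> nh^2"
    by linarith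
  moreover have "(Re z)^2 + (Im z)^2 \<ge> 0" by simp
  ultimately show False by linarith
qed

abbreviation pos where "pos \<equiv> c_positive sc star"

lemma pos_iff: "pos x \<longleftrightarrow> star x = x \<and> (\<forall>z\<in>spec x. Im z = 0 \<and> Re z \<ge> 0)"
proof -
  have "z \<in> {complex_of_real r |r. r \<ge> 0} \<longleftrightarrow> Im z = 0 \<and> Re z \<ge> 0" for z
  proof
    assume "Im z = 0 \<and> Re z \<ge> 0"
    then have "z = complex_of_real (Re z)" by (simp add: complex_eq_iff)
    then show "z \<in> {complex_of_real r |r. r \<ge> 0}" using \<open>Im z = 0 \<and> Re z \<ge> 0\<close> by blast
  qed auto
  then show ?thesis unfolding c_positive_def by blast
qed

lemma spec_ofreal_refl: "z \<in> spec (of_real t - a) \<longleftrightarrow> complex_of_real t - z \<in> spec a"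
  using spec_refl[of z "complex_of_real t" a] e_real by simp

lemma pos_below:
  assumes p: "pos a" and t: "norm a \<le> t"
  shows "pos (of_real t - a)"
  unfolding pos_iff
proof (rule conjI[OF _ ballI])
  show "star (of_real t - a) = of_real t - a" using p by (simp add: pos_iff star_diff star_real)
next
  fix z assume "z \<in> spec (of_real t - a)"
  then have w: "complex_of_real t - z \<in> spec a" by (simp add: spec_ofreal_refl)
  then have "Im (complex_of_real t - z) = 0 \<and> Re (complex_of_real t - z) \<ge> 0"
    using p pos_iff by blast
  moreover have "cmod (complex_of_real t - z) \<le> t" using spec_bound[OF w] t by simp
  moreover have "\<bar>Re (complex_of_real t - z)\<bar> \<le> cmod (complex_of_real t - z)" by (rule abs_Re_le_cmod)
  ultimately show "Im z = 0 \<and> Re z \<ge> 0" by auto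
qed

lemma K_fwd:
  assumes p: "pos a" and t: "norm a \<le> t"
  shows "norm (of_real t - a) \<le> t"
proof (rule spectral_norm)
  show "star (of_real t - a) = of_real t - a" using p by (simp add: pos_iff star_diff star_real)
next
  fix z assume z: "z \<in> spec (of_real t - a)"
  then have "Im z = 0 \<and> Re z \<ge> 0" using pos_below[OF p t] pos_iff by blast
  moreover have w: "complex_of_real t - z \<in> spec a" using z by (simp add: spec_ofreal_refl)
  then have "Re (complex_of_real t - z) \<ge> 0" using p pos_iff by blast
  ultimately show "cmod z \<le> t" by (simp add: cmod_eq_Re)
qed

lemma K_bwd:
  assumes sa: "star a = a" and n: "norm (of_real t - a) \<le> t"
  shows "pos a"
  unfolding pos_iff
proof (rule conjI[OF sa ballI])
  fix z assume z: "z \<in> spec a"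
  have im: "Im z = 0" by (rule real_spec[OF sa z])
  have "complex_of_real t - (complex_of_real t - z) \<in> spec a" using z by simp
  then have "complex_of_real t - z \<in> spec (of_real t - a)" by (simp only: spec_ofreal_refl)
  then have "cmod (complex_of_real t - z) \<le> t" using spec_bound[of "complex_of_real t - z" "of_real t - a"] n by linarith
  moreover have "\<bar>Re (complex_of_real t - z)\<bar> \<le> cmod (complex_of_real t - z)" by (rule abs_Re_le_cmod)
  ultimately show "Im z = 0 \<and> Re z \<ge> 0" using im by auto
qed

lemma pos_add: "pos a \<Longrightarrow> pos b \<Longrightarrow> pos (a + b)"
proof -
  assume a: "pos a" and b: "pos b"
  have "norm (of_real (norm a + norm b) - (a + b)) = norm ((of_real (norm a) - a) + (of_real (norm b) - b))"
    by (simp add: algebra_simps)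
  also have "\<dots> \<le> norm (of_real (norm a) - a) + norm (of_real (norm b) - b)" by (rule norm_triangle_ineq)
  also have "\<dots> \<le> norm a + norm b" using K_fwd[OF a order_refl] K_fwd[OF b order_refl] by simp
  finally show ?thesis
    using a b by (intro K_bwd[of _ "norm a + norm b"]) (simp_all add: pos_iff star_add)
qed

lemma norm_mono:
  assumes a: "pos a" and ba: "pos (b - a)"
  shows "norm a \<le> norm b"
proof -
  have b: "pos b" using pos_add[OF a ba] by simp
  have tb: "pos (of_real (norm b) - b)" using pos_below[OF b order_refl] .
  have ta: "pos (of_real (norm b) - a)" using pos_add[OF tb ba] by simp
  show ?thesis
  proof (rule spectral_norm)
    show "star a = a" using a pos_iff by blast
  next
    fix z assume z: "z \<in> spec a"
    then have "Im z = 0 \<and> Re z \<ge> 0" using a pos_iff by blast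
    moreover have "complex_of_real (norm b) - (complex_of_real (norm b) - z) \<in> spec a" using z by simp
    then have "complex_of_real (norm b) - z \<in> spec (of_real (norm b) - a)" by (simp only: spec_ofreal_refl)
    then have "Re (complex_of_real (norm b) - z) \<ge> 0" using ta pos_iff by blast
    ultimately show "cmod z \<le> norm b" by (simp add: cmod_eq_Re)
  qed
qed

lemma pos_ofreal: "r \<ge> 0 \<Longrightarrow> pos (of_real r)"
  unfolding pos_iff using spec_e[of "complex_of_real r"] by (simp add: e_real star_real)

lemma gt0_ofreal: "r > 0 \<Longrightarrow> c_gt0 sc star (of_real r)"
  unfolding c_gt0_def using pos_ofreal[of r] I_e[of "complex_of_real r"] by (simp add: e_real)

lemma gap:
  assumes g: "c_gt0 sc star ep"
  shows "\<exists>d>0. pos (ep - of_real d)"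
proof -
  have p: "pos ep" and Ie: "I ep" using g unfolding c_gt0_def by auto
  define rho where "rho = 1 / (2 * (norm (inv ep) + 1))"
  have rho0: "rho > 0" unfolding rho_def by (simp add: add_nonneg_pos)
  have far: "cmod z > rho" if z: "z \<in> spec ep" for z
  proof (rule ccontr)
    assume "\<not> cmod z > rho"
    then have "norm (inv ep) * norm (e z) \<le> norm (inv ep) * rho" unfolding norm_e
      by (intro mult_left_mono) auto
    also have "\<dots> = norm (inv ep) / (2 * (norm (inv ep) + 1))" unfolding rho_def by simp
    also have "\<dots> \<le> (norm (inv ep) + 1) / (2 * (norm (inv ep) + 1))"
      by (rule divide_right_mono) (simp_all add: add_nonneg_pos)
    also have "\<dots> = 1/2" using norm_ge_zero[of "inv ep"] by (simp; linarith)
    finally have "norm (inv ep) * norm (e z) \<le> 1/2" .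
    then have "I (ep - e z)" using perturb[OF Ie] by blast
    then show False using z spec_iff by blast
  qed
  show ?thesis
  proof (intro exI[of _ rho] conjI rho0)
    show "pos (ep - of_real rho)" unfolding pos_iff
    proof (rule conjI[OF _ ballI])
      show "star (ep - of_real rho) = ep - of_real rho" using p by (simp add: pos_iff star_diff star_real)
    next
      fix w assume "w \<in> spec (ep - of_real rho)"
      then have "w \<in> spec (ep + e (- complex_of_real rho))" by (simp add: e_minus e_real)
      then have wz: "w + complex_of_real rho \<in> spec ep" using spec_shift by simp
      then have "Im (w + complex_of_real rho) = 0 \<and> Re (w + complex_of_real rho) \<ge> 0" using p pos_iff by blast
      moreover have "cmod (w + complex_of_real rho) > rho" by (rule far[OF wz])
      ultimately show "Im w = 0 \<and> Re w \<ge> 0" by (simp add: cmod_eq_Re)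
    qed
  qed
qed

end


lemma small_zero: "(v::real) \<ge> 0 \<Longrightarrow> (\<And>ep. ep > 0 \<Longrightarrow> v \<le> 2 * ep) \<Longrightarrow> v = 0"
proof (rule ccontr)
  assume a: "v \<ge> 0" "\<And>ep. ep > 0 \<Longrightarrow> v \<le> 2 * ep" "v \<noteq> 0"
  then have p: "v > 0" by simp
  then have "v \<le> 2 * (v / 4)" using a(2)[of "v/4"] by simp
  then show False using p by simp
qed

lemma real_fp:
  fixes D :: "'x \<Rightarrow> 'x \<Rightarrow> real" and T :: "'x \<Rightarrow> 'x" and k :: real
  assumes D0: "\<And>x y. D x y \<ge> 0" and Dxx: "\<And>x. D x x = 0" and Deq: "\<And>x y. D x y = 0 \<Longrightarrow> x = y"
    and tri: "\<And>x y z. D x z \<le> D x y + D y z"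
    and con: "\<And>x y. D (T x) (T y) \<le> k * D x y" and k0: "0 \<le> k" and k1: "k < 1"
    and fc: "\<And>s :: nat \<Rightarrow> 'x. (\<And>ep. ep > 0 \<Longrightarrow> \<exists>K. \<forall>n p. K \<le> p \<and> p < n \<longrightarrow> D (s p) (s n) \<le> ep)
               \<Longrightarrow> \<exists>x. \<forall>ep>0. \<exists>K. \<forall>n\<ge>K. D x (s n) \<le> ep"
    and bc: "\<And>s :: nat \<Rightarrow> 'x. (\<And>ep. ep > 0 \<Longrightarrow> \<exists>K. \<forall>n p. K \<le> p \<and> p < n \<longrightarrow> D (s n) (s p) \<le> ep)
               \<Longrightarrow> \<exists>x. \<forall>ep>0. \<exists>K. \<forall>n\<ge>K. D (s n) x \<le> ep"
  shows "\<exists>!x. T x = x"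
proof -
  define s where "s n = (T ^^ n) undefined" for n
  have sS: "s (Suc n) = T (s n)" for n unfolding s_def by simp
  define c1 where "c1 = D (s 0) (s 1)"
  define c2 where "c2 = D (s 1) (s 0)"
  have st1: "D (s n) (s (Suc n)) \<le> k ^ n * c1" for n
  proof (induction n)
    case 0 then show ?case unfolding c1_def by simp
  next
    case (Suc n)
    have "D (s (Suc n)) (s (Suc (Suc n))) \<le> k * D (s n) (s (Suc n))"
      unfolding sS[of "Suc n"] sS[of n] by (rule con)
    also have "\<dots> \<le> k * (k ^ n * c1)" by (rule mult_left_mono[OF Suc k0])
    finally show ?case by (simp add: mult.assoc)
  qed
  have st2: "D (s (Suc n)) (s n) \<le> k ^ n * c2" for n
  proof (induction n)
    case 0 then show ?case unfolding c2_def by simp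
  next
    case (Suc n)
    have "D (s (Suc (Suc n))) (s (Suc n)) \<le> k * D (s (Suc n)) (s n)"
      unfolding sS[of "Suc n"] sS[of n] by (rule con)
    also have "\<dots> \<le> k * (k ^ n * c2)" by (rule mult_left_mono[OF Suc k0])
    finally show ?case by (simp add: mult.assoc)
  qed
  have gs: "(\<Sum>i<j. k ^ i) \<le> 1 / (1 - k)" for j
  proof -
    have "(\<Sum>i<j. k ^ i) = (1 - k ^ j) / (1 - k)" using k1 by (simp add: sum_gp_strict)
    also have "\<dots> \<le> 1 / (1 - k)" using k0 k1 by (intro divide_right_mono) auto
    finally show ?thesis .
  qed
  have c10: "c1 \<ge> 0" and c20: "c2 \<ge> 0" unfolding c1_def c2_def using D0 by auto
  have f1: "D (s p) (s (p + j)) \<le> c1 * k ^ p * (\<Sum>i<j. k ^ i)" for p j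
  proof (induction j)
    case 0 then show ?case using Dxx by simp
  next
    case (Suc j)
    have "D (s p) (s (p + Suc j)) \<le> D (s p) (s (p + j)) + D (s (p + j)) (s (Suc (p + j)))"
      using tri by simp
    also have "\<dots> \<le> c1 * k ^ p * (\<Sum>i<j. k ^ i) + k ^ (p + j) * c1"
      using Suc st1 by (intro add_mono) auto
    also have "\<dots> = c1 * k ^ p * (\<Sum>i<Suc j. k ^ i)" by (simp add: power_add algebra_simps)
    finally show ?case .
  qed
  have f2: "D (s (p + j)) (s p) \<le> c2 * k ^ p * (\<Sum>i<j. k ^ i)" for p j
  proof (induction j)
    case 0 then show ?case using Dxx by simp
  next
    case (Suc j)
    have "D (s (p + Suc j)) (s p) \<le> D (s (Suc (p + j))) (s (p + j)) + D (s (p + j)) (s p)"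
      using tri by simp
    also have "\<dots> \<le> k ^ (p + j) * c2 + c2 * k ^ p * (\<Sum>i<j. k ^ i)"
      using Suc st2 by (intro add_mono) auto
    also have "\<dots> = c2 * k ^ p * (\<Sum>i<Suc j. k ^ i)" by (simp add: power_add algebra_simps)
    finally show ?case .
  qed
  define C where "C = (c1 + c2) / (1 - k)"
  have C0: "C \<ge> 0" unfolding C_def using c10 c20 k1 by simp
  have fb: "D (s p) (s n) \<le> C * k ^ p \<and> D (s n) (s p) \<le> C * k ^ p" if "p \<le> n" for p n
  proof -
    obtain j where n: "n = p + j" using \<open>p \<le> n\<close> le_Suc_ex by blast
    have kp: "k ^ p \<ge> 0" using k0 by simp
    have "c1 * k ^ p * (\<Sum>i<j. k ^ i) \<le> c1 * k ^ p * (1 / (1 - k))"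
      using gs c10 kp by (intro mult_left_mono) auto
    also have "\<dots> = c1 * (k ^ p / (1 - k))" by simp
    also have "\<dots> \<le> (c1 + c2) * (k ^ p / (1 - k))"
      using c10 c20 kp k1 by (intro mult_right_mono) auto
    also have "\<dots> = C * k ^ p" unfolding C_def by simp
    finally have a: "D (s p) (s n) \<le> C * k ^ p" using f1[of p j] n by simp
    have "c2 * k ^ p * (\<Sum>i<j. k ^ i) \<le> c2 * k ^ p * (1 / (1 - k))"
      using gs c20 kp by (intro mult_left_mono) auto
    also have "\<dots> = c2 * (k ^ p / (1 - k))" by simp
    also have "\<dots> \<le> (c1 + c2) * (k ^ p / (1 - k))"
      using c10 c20 kp k1 by (intro mult_right_mono) auto
    also have "\<dots> = C * k ^ p" unfolding C_def by simp
    finally have b: "D (s n) (s p) \<le> C * k ^ p" using f2[of p j] n by simp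
    show ?thesis using a b by simp
  qed
  have small: "\<exists>K. \<forall>p\<ge>K. C * k ^ p \<le> ep" if ep: "ep > 0" for ep
  proof -
    obtain K where K: "k ^ K < ep / (C + 1)" using real_arch_pow_inv[of "ep / (C + 1)" k] ep C0 k1
      by (smt (verit) divide_pos_pos)
    show ?thesis
    proof (intro exI allI impI)
      fix p assume "K \<le> p"
      then have "k ^ p \<le> k ^ K" using k0 k1 by (intro power_decreasing) auto
      then have "C * k ^ p \<le> (C + 1) * k ^ K" using C0 k0
        by (smt (verit) mult_left_mono mult_right_mono zero_le_power)
      also have "\<dots> < ep" using K C0 by (simp add: field_simps)
      finally show "C * k ^ p \<le> ep" by simp
    qed
  qed
  have "\<exists>x. \<forall>ep>0. \<exists>K. \<forall>n\<ge>K. D x (s n) \<le> ep"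
  proof (rule fc[of s])
    fix ep :: real assume "ep > 0"
    then obtain K where K: "\<forall>p\<ge>K. C * k ^ p \<le> ep" using small by blast
    show "\<exists>K. \<forall>n p. K \<le> p \<and> p < n \<longrightarrow> D (s p) (s n) \<le> ep"
      using K fb by (meson less_imp_le order_trans)
  qed
  then obtain xf where xf: "\<And>ep. ep > 0 \<Longrightarrow> \<exists>K. \<forall>n\<ge>K. D xf (s n) \<le> ep" by blast
  have "\<exists>x. \<forall>ep>0. \<exists>K. \<forall>n\<ge>K. D (s n) x \<le> ep"
  proof (rule bc[of s])
    fix ep :: real assume "ep > 0"
    then obtain K where K: "\<forall>p\<ge>K. C * k ^ p \<le> ep" using small by blast
    show "\<exists>K. \<forall>n p. K \<le> p \<and> p < n \<longrightarrow> D (s n) (s p) \<le> ep"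
      using K fb by (meson less_imp_le order_trans)
  qed
  then obtain xb where xb: "\<And>ep. ep > 0 \<Longrightarrow> \<exists>K. \<forall>n\<ge>K. D (s n) xb \<le> ep" by blast
  have both: "\<exists>n. D xf (s n) \<le> ep \<and> D (s n) xb \<le> ep \<and> D xf (s (Suc n)) \<le> ep" if ep0: "ep > 0" for ep
  proof -
    obtain K1 where K1: "\<forall>n\<ge>K1. D xf (s n) \<le> ep" using xf[OF ep0] by blast
    obtain K2 where K2: "\<forall>n\<ge>K2. D (s n) xb \<le> ep" using xb[OF ep0] by blast
    show ?thesis using K1 K2 by (intro exI[of _ "K1 + K2"]) auto
  qed
  have "D xf xb = 0"
  proof (rule small_zero[OF D0])
    fix ep :: real assume "ep > 0"
    then obtain n where "D xf (s n) \<le> ep" "D (s n) xb \<le> ep" using both by blast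
    then show "D xf xb \<le> 2 * ep" using tri[of xf xb "s n"] by simp
  qed
  then have fb_eq: "xf = xb" by (rule Deq)
  have "D xf (T xf) = 0"
  proof (rule small_zero[OF D0])
    fix ep :: real assume "ep > 0"
    then obtain n where n1: "D (s n) xb \<le> ep" and n2: "D xf (s (Suc n)) \<le> ep" using both by blast
    have "D (s (Suc n)) (T xf) \<le> k * D (s n) xf" unfolding sS by (rule con)
    also have "\<dots> \<le> 1 * ep" using n1 fb_eq k1 D0[of "s n" xf]
      by (intro mult_mono) auto
    finally show "D xf (T xf) \<le> 2 * ep" using tri[of xf "T xf" "s (Suc n)"] n2 by simp
  qed
  then have fxf: "T xf = xf" using Deq by metis
  show ?thesis
  proof (rule ex1I[of _ xf])
    show "T xf = xf" by (rule fxf)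
  next
    fix y assume y: "T y = y"
    have "D y xf \<le> k * D y xf" using con[of y xf] y fxf by simp
    then have "D y xf = 0" using k1 D0[of y xf]
      by (smt (verit) mult_right_less_imp_less mult_cancel_right1 mult_le_cancel_right1)
    then show "y = xf" by (rule Deq)
  qed
qed



context cstar begin

lemma le_eps:
  assumes p: "pos p" and n: "norm p \<le> dl" and g: "pos (ep - of_real dl)"
  shows "c_le sc star p ep"
proof -
  have a: "pos (of_real (norm p) - p)" by (rule pos_below[OF p order_refl])
  have b: "pos (of_real (dl - norm p))" using n by (intro pos_ofreal) simp
  have "ep - p = (ep - of_real dl) + (of_real (dl - norm p) + (of_real (norm p) - p))"
    by (simp add: of_real_diff algebra_simps)
  then show ?thesis unfolding c_le_def using pos_add[OF g pos_add[OF b a]] by simp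
qed

lemma le_norm:
  assumes p: "pos p" and l: "c_le sc star p (of_real ep)"
  shows "norm p \<le> \<bar>ep\<bar>"
  using norm_mono[OF p] l unfolding c_le_def by fastforce

end

theorem mainTheorem2:
  fixes sc :: "complex \<Rightarrow> 'a::{real_normed_algebra_1,banach} \<Rightarrow> 'a"
    and star :: "'a \<Rightarrow> 'a"
    and d :: "'x \<Rightarrow> 'x \<Rightarrow> 'a"
    and T :: "'x \<Rightarrow> 'x"
  assumes "cstar_algebra sc star"
    and "casym_metric sc star d"
    and "casym_complete sc star d"
    and "\<exists>a. norm a < 1 \<and> (\<forall>x y. c_le sc star (d (T x) (T y)) (star a * d x y * a))"
  shows "\<exists>!x. T x = x"
proof -
  interpret c: cstar sc star using assms(1) by (rule cstar.intro)
  obtain a where na: "norm a < 1" and ct: "\<And>x y. c_le sc star (d (T x) (T y)) (star a * d x y * a)"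
    using assms(4) by blast
  have dpos: "c.pos (d x y)" for x y using assms(2) unfolding casym_metric_def c_le_def by simp
  have deq: "d x y = 0 \<longleftrightarrow> x = y" for x y using assms(2) unfolding casym_metric_def by simp
  have dtri: "c_le sc star (d x y) (d x z + d z y)" for x y z
    using assms(2) unfolding casym_metric_def by simp
  define D where "D x y = norm (d x y)" for x y
  define k where "k = norm a ^ 2"
  show ?thesis
  proof (rule real_fp[of D T k])
    show "D x y \<ge> 0" for x y unfolding D_def by simp
    show "D x x = 0" for x unfolding D_def using deq by simp
    show "D x y = 0 \<Longrightarrow> x = y" for x y unfolding D_def using deq by simp
    show "D x z \<le> D x y + D y z" for x y z
    proof -
      have "norm (d x z) \<le> norm (d x y + d y z)"
        using c.norm_mono[OF dpos] dtri unfolding c_le_def by blast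
      also have "\<dots> \<le> norm (d x y) + norm (d y z)" by (rule norm_triangle_ineq)
      finally show ?thesis unfolding D_def .
    qed
    show "D (T x) (T y) \<le> k * D x y" for x y
    proof -
      have "norm (d (T x) (T y)) \<le> norm (star a * d x y * a)"
        using c.norm_mono[OF dpos] ct unfolding c_le_def by blast
      also have "\<dots> \<le> norm (star a * d x y) * norm a" by (rule norm_mult_ineq)
      also have "\<dots> \<le> norm (star a) * norm (d x y) * norm a"
        by (intro mult_right_mono norm_mult_ineq norm_ge_zero)
      also have "\<dots> = k * norm (d x y)" unfolding k_def c.norm_star
        by (simp add: power2_eq_square mult_ac)
      finally show ?thesis unfolding D_def .
    qed
    show "0 \<le> k" unfolding k_def by simp
    show "k < 1" unfolding k_def using na by (simp add: power_less_one_iff abs_less_iff)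
  next
    fix s :: "nat \<Rightarrow> 'x"
    assume rc: "\<And>ep. ep > 0 \<Longrightarrow> \<exists>K. \<forall>n p. K \<le> p \<and> p < n \<longrightarrow> D (s p) (s n) \<le> ep"
    have "forward_cauchy sc star d s"
      unfolding forward_cauchy_def
    proof (intro allI impI)
      fix ep assume "c_gt0 sc star ep"
      then obtain dl where dl: "dl > 0" "c.pos (ep - of_real dl)" using c.gap by blast
      obtain K where K: "\<forall>n p. K \<le> p \<and> p < n \<longrightarrow> D (s p) (s n) \<le> dl" using rc[OF dl(1)] by blast
      show "\<exists>k. \<forall>n p. k \<le> p \<and> p < n \<longrightarrow> c_le sc star (d (s p) (s n)) ep"
        using K c.le_eps[OF dpos _ dl(2)] unfolding D_def by blast
    qed
    then obtain x where x: "forward_conv sc star d s x" using assms(3) unfolding casym_complete_def by blast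
    show "\<exists>x. \<forall>ep>0. \<exists>K. \<forall>n\<ge>K. D x (s n) \<le> ep"
    proof (rule exI[of _ x], intro allI impI)
      fix ep :: real assume ep: "ep > 0"
      then obtain K where "\<forall>n\<ge>K. c_le sc star (d x (s n)) (of_real ep)"
        using x c.gt0_ofreal[OF ep] unfolding forward_conv_def by blast
      then show "\<exists>K. \<forall>n\<ge>K. D x (s n) \<le> ep"
        using c.le_norm[OF dpos] ep unfolding D_def by fastforce
    qed
  next
    fix s :: "nat \<Rightarrow> 'x"
    assume rc: "\<And>ep. ep > 0 \<Longrightarrow> \<exists>K. \<forall>n p. K \<le> p \<and> p < n \<longrightarrow> D (s n) (s p) \<le> ep"
    have "backward_cauchy sc star d s"
      unfolding backward_cauchy_def
    proof (intro allI impI)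
      fix ep assume "c_gt0 sc star ep"
      then obtain dl where dl: "dl > 0" "c.pos (ep - of_real dl)" using c.gap by blast
      obtain K where K: "\<forall>n p. K \<le> p \<and> p < n \<longrightarrow> D (s n) (s p) \<le> dl" using rc[OF dl(1)] by blast
      show "\<exists>k. \<forall>n p. k \<le> p \<and> p < n \<longrightarrow> c_le sc star (d (s n) (s p)) ep"
        using K c.le_eps[OF dpos _ dl(2)] unfolding D_def by blast
    qed
    then obtain x where x: "backward_conv sc star d s x" using assms(3) unfolding casym_complete_def by blast
    show "\<exists>x. \<forall>ep>0. \<exists>K. \<forall>n\<ge>K. D (s n) x \<le> ep"
    proof (rule exI[of _ x], intro allI impI)
      fix ep :: real assume ep: "ep > 0"
      then obtain K where "\<forall>n\<ge>K. c_le sc star (d (s n) x) (of_real ep)"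
        using x c.gt0_ofreal[OF ep] unfolding backward_conv_def by blast
      then show "\<exists>K. \<forall>n\<ge>K. D (s n) x \<le> ep"
        using c.le_norm[OF dpos] ep unfolding D_def by fastforce
    qed
  qed
qed


end
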